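(* Let $(\nu_l)_{l\ge1}$ be probability measures on $(X,\mathcal{A})$, and $R_l:X\to\mathfrak{E}$, $R_l':X\to\mathfrak{E}'$, $l\ge1$, Borel maps into compact metric spaces $\mathfrak{E}$ and $\mathfrak{E}'$. Let $(R,R')$ be a random element of $\mathfrak{E}\times\mathfrak{E}'$ such that $(R_l,R_l')\overset{\nu_l}{\Longrightarrow}(R,R')$ as $l\to\infty$. Assume there is a $\pi$-system $\mathcal{B}^\pi_{\mathfrak{E}}$ generating the Borel $\sigma$-algebra of $\mathfrak{E}$ such that for all $E\in\mathcal{B}^\pi_{\mathfrak{E}}$ we have $\Pr[R\in\partial E]=0$ and, in case $\Pr[R\in E]>0$, $R_l'\overset{(\nu_l)_{\{R_l\in E\}}}{\Longrightarrow}R'$ as $l\to\infty$. Then $R$ and $R'$ are independent.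
   Context: $\nu_B:=\nu(B\cap\cdot)/\nu(B)$ denotes the conditional measure. $R_l\overset{\nu_l}{\Longrightarrow}R$ means the laws $\nu_l\circ R_l^{-1}$ converge weakly to the law of $R$. $\partial E$ is the topological boundary. *)

theory Defs
  imports "HOL-Probability.Probability"
begin

definition weak_conv_seq :: "(nat \<Rightarrow> 'a::metric_space measure) \<Rightarrow> 'a measure \<Rightarrow> bool" where
  "weak_conv_seq \<mu>s \<mu> \<longleftrightarrow>
     (\<forall>f :: 'a \<Rightarrow> real. continuous_on UNIV f \<and> bounded (range f) \<longrightarrow>
        (\<lambda>n. integral\<^sup>L (\<mu>s n) f) \<longlonglongrightarrow> integral\<^sup>L \<mu> f)"

definition cond_measure :: "'a measure \<Rightarrow> 'a set \<Rightarrow> 'a measure" where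
  "cond_measure M B = density M (\<lambda>x. indicator B x / emeasure M B)"

end

theory Submission imports Defs begin

lemma approx_lim:
  fixes a :: "nat \<Rightarrow> real" and b c :: "nat \<Rightarrow> nat \<Rightarrow> real"
  assumes ab: "\<And>k l. \<bar>a l - b k l\<bar> \<le> c k l"
    and AB: "\<And>k. \<bar>A - B k\<bar> \<le> C k"
    and bl: "\<And>k. (\<lambda>l. b k l) \<longlonglongrightarrow> B k"
    and cl: "\<And>k. (\<lambda>l. c k l) \<longlonglongrightarrow> C k"
    and C0: "C \<longlonglongrightarrow> 0"
  shows "a \<longlonglongrightarrow> A"
proof (rule LIMSEQ_I)
  fix r :: real assume r: "0 < r"
  then have "r/4 > 0" by simp
  from LIMSEQ_D[OF C0 this] obtain k where k: "norm (C k - 0) < r/4" by auto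
  from LIMSEQ_D[OF bl \<open>r/4 > 0\<close>] obtain N1 where N1: "\<And>l. l \<ge> N1 \<Longrightarrow> norm (b k l - B k) < r/4" by auto
  from LIMSEQ_D[OF cl \<open>r/4 > 0\<close>] obtain N2 where N2: "\<And>l. l \<ge> N2 \<Longrightarrow> norm (c k l - C k) < r/4" by auto
  show "\<exists>no. \<forall>n\<ge>no. norm (a n - A) < r"
  proof (intro exI allI impI)
    fix l assume "max N1 N2 \<le> l"
    then have "norm (b k l - B k) < r/4" "norm (c k l - C k) < r/4" using N1 N2 by auto
    moreover note ab[of l k] AB[of k] k
    ultimately show "norm (a l - A) < r" by (simp add: abs_if split: if_splits) linarith?
  qed
qed

definition up :: "'a::metric_space set \<Rightarrow> nat \<Rightarrow> 'a \<Rightarrow> real" where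
  "up S k x = (if S = {} then 0 else max 0 (1 - real k * infdist x S))"

lemma up_cont: "continuous_on UNIV (up S k)"
  unfolding up_def by (cases "S = {}") (auto intro!: continuous_intros)

lemma up_bounds: "0 \<le> up S k x" "up S k x \<le> 1"
  unfolding up_def using infdist_nonneg[of x S] by auto

lemma up_abs: "\<bar>up S k x\<bar> \<le> 1"
  by (metis abs_of_nonneg up_bounds(1) up_bounds(2))

lemma up_ge: "indicator (closure S) x \<le> up S k x"
proof (cases "x \<in> closure S")
  case True
  then have "S \<noteq> {}" by auto
  with True have "infdist x S = 0" using in_closure_iff_infdist_zero by blast
  then show ?thesis using True \<open>S \<noteq> {}\<close> by (simp add: up_def)
qed (simp add: up_bounds)

lemma up_lim: "(\<lambda>k. up S k x) \<longlonglongrightarrow> indicator (closure S) x"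
proof (cases "x \<in> closure S")
  case True
  then have "S \<noteq> {}" by auto
  with True have "infdist x S = 0" using in_closure_iff_infdist_zero by blast
  then show ?thesis using True \<open>S \<noteq> {}\<close> by (simp add: up_def)
next
  case False
  show ?thesis
  proof (cases "S = {}")
    case True then show ?thesis using False by (simp add: up_def)
  next
    case ne: False
    then have d: "infdist x S > 0" using False in_closure_iff_infdist_zero infdist_nonneg
      by (metis order_le_less)
    obtain n :: nat where n: "1 / infdist x S < n" using reals_Archimedean2 by blast
    have "eventually (\<lambda>k. up S k x = 0) sequentially"
    proof (rule eventually_sequentiallyI[of n])
      fix k assume "n \<le> k"
      then have "1 / infdist x S < real k" using n by linarith
      then have "1 < real k * infdist x S" using d by (simp add: field_simps)
      then show "up S k x = 0" using ne by (simp add: up_def)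
    qed
    then show ?thesis using False by (simp add: tendsto_eventually)
  qed
qed

lemma bdd_integrable:
  fixes f :: "'a \<Rightarrow> real"
  assumes "prob_space M" "f \<in> borel_measurable M" "\<And>x. x \<in> space M \<Longrightarrow> \<bar>f x\<bar> \<le> K"
  shows "integrable M f"
proof -
  interpret prob_space M by fact
  show ?thesis using assms(2,3) by (intro integrable_const_bound[where B=K]) auto
qed

lemma int_diff_bound:
  fixes f1 f2 h :: "'a \<Rightarrow> real"
  assumes P: "prob_space M" and m: "f1 \<in> borel_measurable M" "f2 \<in> borel_measurable M" "h \<in> borel_measurable M"
    and b: "\<And>x. x \<in> space M \<Longrightarrow> \<bar>f1 x\<bar> \<le> K" "\<And>x. x \<in> space M \<Longrightarrow> \<bar>f2 x\<bar> \<le> K"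
      "\<And>x. x \<in> space M \<Longrightarrow> \<bar>h x\<bar> \<le> K"
    and d: "\<And>x. x \<in> space M \<Longrightarrow> \<bar>f1 x - f2 x\<bar> \<le> h x"
  shows "\<bar>integral\<^sup>L M f1 - integral\<^sup>L M f2\<bar> \<le> integral\<^sup>L M h"
proof -
  have i: "integrable M f1" "integrable M f2" "integrable M h"
    using bdd_integrable[OF P] m b by blast+
  have "integral\<^sup>L M f1 - integral\<^sup>L M f2 = integral\<^sup>L M (\<lambda>x. f1 x - f2 x)"
    using i by simp
  also have "\<bar>\<dots>\<bar> \<le> integral\<^sup>L M (\<lambda>x. \<bar>f1 x - f2 x\<bar>)"
    using integral_norm_bound[of M "\<lambda>x. f1 x - f2 x"] by simp
  also have "\<dots> \<le> integral\<^sup>L M h"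
    using i d by (intro integral_mono) auto
  finally show ?thesis .
qed


lemma up_cont'[continuous_intros]: "continuous_on A f \<Longrightarrow> continuous_on A (\<lambda>x. up S k (f x))"
  using continuous_on_compose2[OF up_cont, of A f] by auto

lemma pw_bound:
  fixes lo i u y C :: real
  assumes "lo \<le> i" "i \<le> u" "\<bar>y\<bar> \<le> C"
  shows "\<bar>i * y - lo * y\<bar> \<le> C * (u - lo)"
proof -
  have "\<bar>i * y - lo * y\<bar> = (i - lo) * \<bar>y\<bar>" using assms by (simp add: left_diff_distrib[symmetric] abs_mult)
  also have "\<dots> \<le> (u - lo) * C" using assms by (intro mult_mono) auto
  finally show ?thesis by (simp add: mult.commute)
qed

lemma ind_frontier:
  "indicator (closure E) x - (1 - indicator (closure (- E)) x) = (indicator (frontier E) x :: real)"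
  using interior_subset[of E] closure_subset[of E]
  by (auto simp: indicator_def frontier_def closure_complement)

lemma lo_le: "1 - up (- E) k x \<le> (indicator E x :: real)"
  using up_ge[of "-E" x k] closure_subset[of "-E"] up_bounds[of "-E" k x]
  by (auto simp: indicator_def split: if_splits)

lemma le_up: "(indicator E x :: real) \<le> up E k x"
  using up_ge[of E x k] closure_subset[of E] up_bounds[of E k x]
  by (auto simp: indicator_def split: if_splits)


lemma K1:
  fixes \<nu> :: "nat \<Rightarrow> 'x measure"
    and Rl :: "nat \<Rightarrow> 'x \<Rightarrow> 'e::{metric_space, second_countable_topology}"
    and Rl' :: "nat \<Rightarrow> 'x \<Rightarrow> 'f::{metric_space, second_countable_topology}"
    and P :: "'w measure" and R :: "'w \<Rightarrow> 'e" and R' :: "'w \<Rightarrow> 'f"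
    and g :: "'f \<Rightarrow> real"
  assumes prob_nu: "\<And>l. prob_space (\<nu> l)"
    and meas_Rl[measurable]: "\<And>l. Rl l \<in> borel_measurable (\<nu> l)"
    and meas_Rl'[measurable]: "\<And>l. Rl' l \<in> borel_measurable (\<nu> l)"
    and prob_P: "prob_space P"
    and meas_R[measurable]: "R \<in> borel_measurable P"
    and meas_R'[measurable]: "R' \<in> borel_measurable P"
    and joint_conv: "weak_conv_seq (\<lambda>l. distr (\<nu> l) borel (\<lambda>x. (Rl l x, Rl' l x)))
                                   (distr P borel (\<lambda>w. (R w, R' w)))"
    and E[measurable]: "E \<in> sets borel"
    and bnd: "measure P {w \<in> space P. R w \<in> frontier E} = 0"
    and gc: "continuous_on UNIV g" and gb: "\<And>y. \<bar>g y\<bar> \<le> Cg"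
  shows "(\<lambda>l. \<integral>x. indicator E (Rl l x) * g (Rl' l x) \<partial>\<nu> l) \<longlonglongrightarrow> (\<integral>w. indicator E (R w) * g (R' w) \<partial>P)"
proof -
  have gm[measurable]: "g \<in> borel_measurable borel" by (rule borel_measurable_continuous_onI[OF gc])
  have upm[measurable]: "\<And>S k. up S k \<in> borel_measurable borel" by (rule borel_measurable_continuous_onI[OF up_cont])
  have Cg0: "0 \<le> Cg" using gb[of undefined] by linarith
  have wc: "(\<lambda>l. \<integral>x. \<phi> (Rl l x, Rl' l x) \<partial>\<nu> l) \<longlonglongrightarrow> (\<integral>w. \<phi> (R w, R' w) \<partial>P)"
    if phc: "continuous_on UNIV \<phi>" and phb: "\<And>p. \<bar>\<phi> p\<bar> \<le> K" for \<phi> :: "'e \<times> 'f \<Rightarrow> real" and K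
  proof -
    have phm[measurable]: "\<phi> \<in> borel_measurable borel" by (rule borel_measurable_continuous_onI[OF phc])
    have "bounded (range \<phi>)" using phb by (auto simp: bounded_iff)
    with joint_conv phc have "(\<lambda>l. integral\<^sup>L (distr (\<nu> l) borel (\<lambda>x. (Rl l x, Rl' l x))) \<phi>)
        \<longlonglongrightarrow> integral\<^sup>L (distr P borel (\<lambda>w. (R w, R' w))) \<phi>"
      unfolding weak_conv_seq_def by blast
    moreover have "\<And>l. integral\<^sup>L (distr (\<nu> l) borel (\<lambda>x. (Rl l x, Rl' l x))) \<phi> = (\<integral>x. \<phi> (Rl l x, Rl' l x) \<partial>\<nu> l)"
      by (rule integral_distr) measurable
    moreover have "integral\<^sup>L (distr P borel (\<lambda>w. (R w, R' w))) \<phi> = (\<integral>w. \<phi> (R w, R' w) \<partial>P)"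
      by (rule integral_distr) measurable
    ultimately show ?thesis by simp
  qed
  define lo where "lo k e = 1 - up (-E) k e" for k e
  have lom[measurable]: "\<And>k. lo k \<in> borel_measurable borel" unfolding lo_def by measurable
  have lob: "0 \<le> lo k e" "lo k e \<le> 1" for k e using up_bounds[of "-E" k e] by (auto simp: lo_def)
  have lo_cont[continuous_intros]: "continuous_on A f \<Longrightarrow> continuous_on A (\<lambda>x. lo k (f x))" for A f k
    unfolding lo_def by (intro continuous_intros)
  have lei: "lo k e \<le> indicator E e" "indicator E e \<le> up E k e" for k e
    using lo_le le_up unfolding lo_def by auto
  define b where "b k l = (\<integral>x. lo k (Rl l x) * g (Rl' l x) \<partial>\<nu> l)" for k l
  define c where "c k l = (\<integral>x. Cg * (up E k (Rl l x) - lo k (Rl l x)) \<partial>\<nu> l)" for k l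
  define B where "B k = (\<integral>w. lo k (R w) * g (R' w) \<partial>P)" for k
  define C where "C k = (\<integral>w. Cg * (up E k (R w) - lo k (R w)) \<partial>P)" for k
  have pb: "\<bar>indicator E e * g f - lo k e * g f\<bar> \<le> Cg * (up E k e - lo k e)" for e f k
    using pw_bound[OF lei(1) lei(2) gb] .
  have b1: "\<bar>indicator E e * g f\<bar> \<le> Cg" for e f
    using gb[of f] by (auto simp: indicator_def)
  have b2: "\<bar>lo k e * g f\<bar> \<le> Cg" for e f k
  proof -
    have "\<bar>lo k e * g f\<bar> = lo k e * \<bar>g f\<bar>" using lob by (simp add: abs_mult)
    also have "\<dots> \<le> 1 * Cg" using lob gb by (intro mult_mono) auto
    finally show ?thesis by simp
  qed
  have b3: "\<bar>Cg * (up E k e - lo k e)\<bar> \<le> Cg" for e k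
  proof -
    have "0 \<le> up E k e - lo k e" "up E k e - lo k e \<le> 1"
      using lei(1)[of k e] lei(2)[of e k] up_bounds[of E k e] lob(1)[of k e] lob(2)[of k e] by auto
    then show ?thesis using Cg0 by (simp add: abs_mult mult_left_le)
  qed
  have h1: "\<bar>(\<integral>x. indicator E (Rl l x) * g (Rl' l x) \<partial>\<nu> l) - b k l\<bar> \<le> c k l" for k l
      unfolding b_def c_def by (rule int_diff_bound[OF prob_nu, where K=Cg]) (measurable, use pb b1 b2 b3 in auto)
  have h2: "\<bar>(\<integral>w. indicator E (R w) * g (R' w) \<partial>P) - B k\<bar> \<le> C k" for k
      unfolding B_def C_def by (rule int_diff_bound[OF prob_P, where K=Cg]) (measurable, use pb b1 b2 b3 in auto)
  have h3: "(\<lambda>l. b k l) \<longlonglongrightarrow> B k" for k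
    proof -
      have "continuous_on UNIV (\<lambda>p. g (snd p))"
        using continuous_on_compose2[OF gc continuous_on_snd[OF continuous_on_id]] by auto
      then have "continuous_on UNIV (\<lambda>p. lo k (fst p) * g (snd p))"
        by (intro continuous_intros)
      from wc[OF this, of Cg] b2 show ?thesis by (simp add: b_def B_def)
    qed
  have h4: "(\<lambda>l. c k l) \<longlonglongrightarrow> C k" for k
    proof -
      have "continuous_on UNIV (\<lambda>p. Cg * (up E k (fst p) - lo k (fst p)))"
        by (intro continuous_intros)
      from wc[OF this, of Cg] b3 show ?thesis by (simp add: c_def C_def)
    qed
  have h5: "C \<longlonglongrightarrow> 0"
  proof -
    interpret p: prob_space P by fact
    have [measurable]: "frontier E \<in> sets borel" by (simp add: borel_closed)
    have "C \<longlonglongrightarrow> (\<integral>w. Cg * indicator (frontier E) (R w) \<partial>P)"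
      unfolding C_def
    proof (rule integral_dominated_convergence[where w="\<lambda>_. Cg"])
      show "AE x in P. (\<lambda>k. Cg * (up E k (R x) - lo k (R x))) \<longlonglongrightarrow> Cg * indicator (frontier E) (R x)"
      proof (rule AE_I2)
        fix x
        have "(\<lambda>k. Cg * (up E k (R x) - lo k (R x))) \<longlonglongrightarrow>
             Cg * (indicator (closure E) (R x) - (1 - indicator (closure (- E)) (R x)))"
          unfolding lo_def by (intro tendsto_intros up_lim)
        then show "(\<lambda>k. Cg * (up E k (R x) - lo k (R x))) \<longlonglongrightarrow> Cg * indicator (frontier E) (R x)"
          by (simp add: ind_frontier)
      qed
      show "\<And>k. AE x in P. norm (Cg * (up E k (R x) - lo k (R x))) \<le> Cg"
        using b3 by auto
      show "(\<lambda>w. Cg * indicator (frontier E) (R w)) \<in> borel_measurable P" by measurable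
      show "\<And>k. (\<lambda>w. Cg * (up E k (R w) - lo k (R w))) \<in> borel_measurable P" by measurable
      show "integrable P (\<lambda>_. Cg)" by auto
    qed
    also have "(\<integral>w. Cg * indicator (frontier E) (R w) \<partial>P) = Cg * (\<integral>w. indicator (frontier E) (R w) \<partial>P)"
      by simp
    also have "(\<integral>w. indicator (frontier E) (R w) \<partial>P) = (\<integral>w. indicator {w \<in> space P. R w \<in> frontier E} w \<partial>P)"
      by (rule Bochner_Integration.integral_cong) (auto simp: indicator_def)
    also have "\<dots> = measure P {w \<in> space P. R w \<in> frontier E}"
      by (simp add: Int_absorb2 subset_iff)
    also have "Cg * \<dots> = 0" using bnd by simp
    finally show "C \<longlonglongrightarrow> 0" .
  qed
  show ?thesis by (rule approx_lim[OF h1 h2 h3 h4 h5])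
qed


lemma cond_int:
  fixes N :: "'x measure" and g :: "'f::{metric_space, second_countable_topology} \<Rightarrow> real"
    and S :: "'x \<Rightarrow> 'e::{metric_space, second_countable_topology}" and T :: "'x \<Rightarrow> 'f"
  assumes "prob_space N" and [measurable]: "S \<in> borel_measurable N" "T \<in> borel_measurable N"
    and [measurable]: "E \<in> sets borel" "g \<in> borel_measurable borel"
    and m: "measure N {x \<in> space N. S x \<in> E} > 0"
  shows "integral\<^sup>L (distr (cond_measure N {x \<in> space N. S x \<in> E}) borel T) g
     = (\<integral>x. indicator E (S x) * g (T x) \<partial>N) / measure N {x \<in> space N. S x \<in> E}"
proof -
  interpret prob_space N by fact
  define B where "B = {x \<in> space N. S x \<in> E}"
  define m where "m = measure N B"
  have [measurable]: "B \<in> sets N" unfolding B_def by measurable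
  have mpos: "m > 0" using assms(6) by (simp add: m_def B_def)
  have em: "emeasure N B = ennreal m" by (simp add: m_def emeasure_eq_measure)
  have dens: "(\<lambda>x. indicator B x / emeasure N B) = (\<lambda>x. ennreal (indicator B x / m))"
  proof
    fix x show "indicator B x / emeasure N B = ennreal (indicator B x / m)"
      using mpos divide_ennreal[of 1 m] by (cases "x \<in> B") (auto simp: em)
  qed
  have "integral\<^sup>L (distr (cond_measure N B) borel T) g = (\<integral>x. g (T x) \<partial>cond_measure N B)"
    by (rule integral_distr) (auto simp: cond_measure_def)
  also have "\<dots> = (\<integral>x. (indicator B x / m) *\<^sub>R g (T x) \<partial>N)"
    unfolding cond_measure_def dens
    by (rule integral_density) (measurable, auto intro: divide_nonneg_pos mpos)
  also have "\<dots> = (\<integral>x. indicator E (S x) * g (T x) / m \<partial>N)"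
    by (rule Bochner_Integration.integral_cong) (auto simp: B_def indicator_def)
  also have "\<dots> = (\<integral>x. indicator E (S x) * g (T x) \<partial>N) / m"
    by simp
  finally show ?thesis by (simp add: B_def m_def)
qed


lemma K2:
  fixes \<nu> :: "nat \<Rightarrow> 'x measure"
    and Rl :: "nat \<Rightarrow> 'x \<Rightarrow> 'e::{metric_space, second_countable_topology}"
    and Rl' :: "nat \<Rightarrow> 'x \<Rightarrow> 'f::{metric_space, second_countable_topology}"
    and P :: "'w measure" and R :: "'w \<Rightarrow> 'e" and R' :: "'w \<Rightarrow> 'f"
    and g :: "'f \<Rightarrow> real"
  assumes prob_nu: "\<And>l. prob_space (\<nu> l)"
    and meas_Rl[measurable]: "\<And>l. Rl l \<in> borel_measurable (\<nu> l)"
    and meas_Rl'[measurable]: "\<And>l. Rl' l \<in> borel_measurable (\<nu> l)"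
    and prob_P: "prob_space P"
    and meas_R[measurable]: "R \<in> borel_measurable P"
    and meas_R'[measurable]: "R' \<in> borel_measurable P"
    and joint_conv: "weak_conv_seq (\<lambda>l. distr (\<nu> l) borel (\<lambda>x. (Rl l x, Rl' l x)))
                                   (distr P borel (\<lambda>w. (R w, R' w)))"
    and E[measurable]: "E \<in> sets borel"
    and bnd: "measure P {w \<in> space P. R w \<in> frontier E} = 0"
    and cc: "measure P {w \<in> space P. R w \<in> E} > 0 \<Longrightarrow>
        weak_conv_seq (\<lambda>l. distr (cond_measure (\<nu> l) {x \<in> space (\<nu> l). Rl l x \<in> E}) borel (Rl' l))
                      (distr P borel R')"
    and gc: "continuous_on UNIV g" and gb: "\<And>y. \<bar>g y\<bar> \<le> Cg"
  shows "(\<integral>w. indicator E (R w) * g (R' w) \<partial>P) = measure P {w \<in> space P. R w \<in> E} * (\<integral>w. g (R' w) \<partial>P)"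
proof -
  interpret p: prob_space P by fact
  have gm[measurable]: "g \<in> borel_measurable borel" by (rule borel_measurable_continuous_onI[OF gc])
  have Cg0: "0 \<le> Cg" using gb[of undefined] by linarith
  define p where "p = measure P {w \<in> space P. R w \<in> E}"
  have ind_int: "(\<integral>w. indicator E (R w) \<partial>M) = measure M {w \<in> space M. R w \<in> E}" for M :: "'w measure"
  proof -
    have "(\<integral>w. indicator E (R w) \<partial>M) = (\<integral>w. indicator {w \<in> space M. R w \<in> E} w \<partial>M)"
      by (rule Bochner_Integration.integral_cong) (auto simp: indicator_def)
    also have "\<dots> = measure M {w \<in> space M. R w \<in> E}"
      by (simp add: Int_absorb2 subset_iff)
    finally show ?thesis .
  qed
  have ind_int': "(\<integral>x. indicator E (Rl l x) \<partial>\<nu> l) = measure (\<nu> l) {x \<in> space (\<nu> l). Rl l x \<in> E}" for l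
  proof -
    have "(\<integral>x. indicator E (Rl l x) \<partial>\<nu> l) = (\<integral>x. indicator {x \<in> space (\<nu> l). Rl l x \<in> E} x \<partial>\<nu> l)"
      by (rule Bochner_Integration.integral_cong) (auto simp: indicator_def)
    also have "\<dots> = measure (\<nu> l) {x \<in> space (\<nu> l). Rl l x \<in> E}"
      by (simp add: Int_absorb2 subset_iff)
    finally show ?thesis .
  qed
  show ?thesis
  proof (cases "p > 0")
    case False
    then have p0: "p = 0" using measure_nonneg[of P] unfolding p_def by (metis less_eq_real_def)
    have "\<bar>(\<integral>w. indicator E (R w) * g (R' w) \<partial>P) - (\<integral>w. 0 \<partial>P)\<bar> \<le> (\<integral>w. Cg * indicator E (R w) \<partial>P)"
    proof (rule int_diff_bound[OF prob_P, where K=Cg])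
      fix x
      show "\<bar>indicator E (R x) * g (R' x)\<bar> \<le> Cg" "\<bar>0::real\<bar> \<le> Cg" "\<bar>Cg * indicator E (R x)\<bar> \<le> Cg"
        "\<bar>indicator E (R x) * g (R' x) - 0\<bar> \<le> Cg * indicator E (R x)"
        using gb[of "R' x"] Cg0 by (auto simp: indicator_def)
    qed measurable
    also have "(\<integral>w. Cg * indicator E (R w) \<partial>P) = Cg * p"
      using ind_int[of P] by (simp add: p_def)
    finally show ?thesis using p0 by (simp add: p_def)
  next
    case True
    define a where "a l = (\<integral>x. indicator E (Rl l x) * g (Rl' l x) \<partial>\<nu> l)" for l
    define m where "m l = measure (\<nu> l) {x \<in> space (\<nu> l). Rl l x \<in> E}" for l
    have a_lim: "a \<longlonglongrightarrow> (\<integral>w. indicator E (R w) * g (R' w) \<partial>P)"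
      unfolding a_def by (rule K1[OF prob_nu meas_Rl meas_Rl' prob_P meas_R meas_R' joint_conv E bnd gc gb])
    have "(\<lambda>l. \<integral>x. indicator E (Rl l x) \<partial>\<nu> l) \<longlonglongrightarrow> (\<integral>w. indicator E (R w) \<partial>P :: real)"
      using K1[OF prob_nu meas_Rl meas_Rl' prob_P meas_R meas_R' joint_conv E bnd, where g="\<lambda>_. 1" and Cg=1]
      by simp
    then have m_lim: "m \<longlonglongrightarrow> p"
      unfolding m_def p_def by (simp add: ind_int ind_int')
    have ev: "eventually (\<lambda>l. m l > 0) sequentially"
      using order_tendstoD(1)[OF m_lim True] .
    have "(\<lambda>l. integral\<^sup>L (distr (cond_measure (\<nu> l) {x \<in> space (\<nu> l). Rl l x \<in> E}) borel (Rl' l)) g)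
        \<longlonglongrightarrow> integral\<^sup>L (distr P borel R') g"
      using cc True gc gb unfolding p_def weak_conv_seq_def
      by (auto simp: bounded_iff intro!: exI[of _ Cg])
    moreover have "integral\<^sup>L (distr P borel R') g = (\<integral>w. g (R' w) \<partial>P)"
      by (rule integral_distr) measurable
    moreover have "eventually (\<lambda>l. integral\<^sup>L (distr (cond_measure (\<nu> l) {x \<in> space (\<nu> l). Rl l x \<in> E}) borel (Rl' l)) g
        = a l / m l) sequentially"
      using ev
    proof eventually_elim
      case (elim l)
      then show ?case unfolding a_def m_def
        by (intro cond_int[OF prob_nu]) (auto simp: m_def)
    qed
    ultimately have l1: "(\<lambda>l. a l / m l) \<longlonglongrightarrow> (\<integral>w. g (R' w) \<partial>P)"
      using Lim_transform_eventually by fastforce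
    have l2: "(\<lambda>l. a l / m l) \<longlonglongrightarrow> (\<integral>w. indicator E (R w) * g (R' w) \<partial>P) / p"
      using True by (intro tendsto_intros a_lim m_lim) simp
    from LIMSEQ_unique[OF l2 l1] True show ?thesis
      by (simp add: p_def field_simps)
  qed
qed


theorem mainTheorem11:
  fixes \<nu> :: "nat \<Rightarrow> 'x measure" and M :: "'x measure"
    and Rl :: "nat \<Rightarrow> 'x \<Rightarrow> 'e::{metric_space, second_countable_topology}"
    and Rl' :: "nat \<Rightarrow> 'x \<Rightarrow> 'f::{metric_space, second_countable_topology}"
    and P :: "'w measure" and R :: "'w \<Rightarrow> 'e" and R' :: "'w \<Rightarrow> 'f"
    and Bpi :: "'e set set"
  assumes compE: "compact (UNIV :: 'e set)"
    and compE': "compact (UNIV :: 'f set)"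
    and prob_nu: "\<And>l. prob_space (\<nu> l)"
    and sets_nu: "\<And>l. sets (\<nu> l) = sets M"
    and meas_Rl: "\<And>l. Rl l \<in> borel_measurable (\<nu> l)"
    and meas_Rl': "\<And>l. Rl' l \<in> borel_measurable (\<nu> l)"
    and prob_P: "prob_space P"
    and meas_R: "R \<in> borel_measurable P"
    and meas_R': "R' \<in> borel_measurable P"
    and joint_conv: "weak_conv_seq (\<lambda>l. distr (\<nu> l) borel (\<lambda>x. (Rl l x, Rl' l x)))
                                   (distr P borel (\<lambda>w. (R w, R' w)))"
    and pi_system: "Int_stable Bpi"
    and generates: "sigma_sets UNIV Bpi = sets (borel :: 'e measure)"
    and boundary: "\<And>E. E \<in> Bpi \<Longrightarrow> measure P {w \<in> space P. R w \<in> frontier E} = 0"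
    and cond_conv: "\<And>E. E \<in> Bpi \<Longrightarrow> measure P {w \<in> space P. R w \<in> E} > 0 \<Longrightarrow>
        weak_conv_seq (\<lambda>l. distr (cond_measure (\<nu> l) {x \<in> space (\<nu> l). Rl l x \<in> E}) borel (Rl' l))
                      (distr P borel R')"
  shows "prob_space.indep_set P
           (sigma_sets (space P) {R -` A \<inter> space P | A. A \<in> sets (borel :: 'e measure)})
           (sigma_sets (space P) {R' -` A \<inter> space P | A. A \<in> sets (borel :: 'f measure)})"
proof -
  interpret p: prob_space P by fact
  note [measurable] = meas_R meas_R'
  have Eb: "E \<in> sets borel" if "E \<in> Bpi" for E
    using that generates[symmetric] by (auto intro: sigma_sets.Basic)
  have K3: "p.prob ((R -` E \<inter> space P) \<inter> (R' -` F \<inter> space P)) =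
      p.prob (R -` E \<inter> space P) * p.prob (R' -` F \<inter> space P)"
    if E: "E \<in> Bpi" and F: "closed F" for E F
  proof -
    have [measurable]: "E \<in> sets borel" using Eb[OF E] .
    have [measurable]: "F \<in> sets borel" using F by (simp add: borel_closed)
    have upm[measurable]: "\<And>S k. up S k \<in> borel_measurable borel" by (rule borel_measurable_continuous_onI[OF up_cont])
    define p where "p = measure P {w \<in> space P. R w \<in> E}"
    have eq: "(\<integral>w. indicator E (R w) * up F k (R' w) \<partial>P) = p * (\<integral>w. up F k (R' w) \<partial>P)" for k
      unfolding p_def
      by (rule K2[OF prob_nu meas_Rl meas_Rl' prob_P meas_R meas_R' joint_conv Eb[OF E] boundary[OF E]
            cond_conv[OF E] up_cont, where Cg=1]) (simp_all add: up_abs)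
    have l1: "(\<lambda>k. \<integral>w. indicator E (R w) * up F k (R' w) \<partial>P) \<longlonglongrightarrow> (\<integral>w. indicator E (R w) * indicator F (R' w) \<partial>P)"
    proof (rule integral_dominated_convergence[where w="\<lambda>_. 1"])
      show "AE x in P. (\<lambda>k. indicator E (R x) * up F k (R' x)) \<longlonglongrightarrow> indicator E (R x) * indicator F (R' x)"
        using up_lim[of F] F by (intro AE_I2 tendsto_intros) (simp add: closure_closed)
      show "\<And>k. AE x in P. norm (indicator E (R x) * up F k (R' x)) \<le> 1"
        using up_abs by (auto simp: indicator_def)
      show "(\<lambda>w. indicator E (R w) * indicator F (R' w) :: real) \<in> borel_measurable P" by measurable
      show "\<And>k. (\<lambda>w. indicator E (R w) * up F k (R' w)) \<in> borel_measurable P" by measurable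
      show "integrable P (\<lambda>_. 1::real)" by auto
    qed
    have l2: "(\<lambda>k. \<integral>w. up F k (R' w) \<partial>P) \<longlonglongrightarrow> (\<integral>w. indicator F (R' w) \<partial>P)"
    proof (rule integral_dominated_convergence[where w="\<lambda>_. 1"])
      show "AE x in P. (\<lambda>k. up F k (R' x)) \<longlonglongrightarrow> indicator F (R' x)"
        using up_lim[of F] F by (intro AE_I2) (simp add: closure_closed)
      show "\<And>k. AE x in P. norm (up F k (R' x)) \<le> 1"
        using up_abs by auto
      show "(\<lambda>w. indicator F (R' w) :: real) \<in> borel_measurable P" by measurable
      show "\<And>k. (\<lambda>w. up F k (R' w)) \<in> borel_measurable P" by measurable
      show "integrable P (\<lambda>_. 1::real)" by auto
    qed
    have l2': "(\<lambda>k. \<integral>w. indicator E (R w) * up F k (R' w) \<partial>P) \<longlonglongrightarrow> p * (\<integral>w. indicator F (R' w) \<partial>P)"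
      unfolding eq by (intro tendsto_intros l2)
    from LIMSEQ_unique[OF l1 l2'] have *: "(\<integral>w. indicator E (R w) * indicator F (R' w) \<partial>P) = p * (\<integral>w. indicator F (R' w) \<partial>P)" .
    have i1: "(\<integral>w. indicator E (R w) * indicator F (R' w) \<partial>P :: real) = p.prob ((R -` E \<inter> space P) \<inter> (R' -` F \<inter> space P))"
    proof -
      have "(\<integral>w. indicator E (R w) * indicator F (R' w) \<partial>P :: real) = (\<integral>w. indicator ((R -` E \<inter> space P) \<inter> (R' -` F \<inter> space P)) w \<partial>P)"
        by (rule Bochner_Integration.integral_cong) (auto simp: indicator_def)
      also have "\<dots> = p.prob ((R -` E \<inter> space P) \<inter> (R' -` F \<inter> space P))"
        by (simp add: Int_absorb2 Int_assoc)
      finally show ?thesis .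
    qed
    have i2: "(\<integral>w. indicator F (R' w) \<partial>P :: real) = p.prob (R' -` F \<inter> space P)"
    proof -
      have "(\<integral>w. indicator F (R' w) \<partial>P :: real) = (\<integral>w. indicator (R' -` F \<inter> space P) w \<partial>P)"
        by (rule Bochner_Integration.integral_cong) (auto simp: indicator_def)
      also have "\<dots> = p.prob (R' -` F \<inter> space P)"
        by (simp add: Int_absorb2 Int_assoc)
      finally show ?thesis .
    qed
    have i3: "p = p.prob (R -` E \<inter> space P)"
      unfolding p_def by (rule arg_cong[where f="measure P"]) auto
    show ?thesis using * i1 i2 i3 by simp
  qed
  define A where "A = {R -` E \<inter> space P | E. E \<in> Bpi}"
  define B where "B = {R' -` F \<inter> space P | F. closed F}"
  have ind: "p.indep_set A B"
  proof (rule p.indep_setI)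
    show "A \<subseteq> p.events" unfolding A_def using Eb by (auto intro: measurable_sets[OF meas_R])
    show "B \<subseteq> p.events" unfolding B_def by (auto intro: measurable_sets[OF meas_R'] simp: borel_closed)
    show "p.prob (a \<inter> b) = p.prob a * p.prob b" if "a \<in> A" "b \<in> B" for a b
      using that K3 unfolding A_def B_def by auto
  qed
  have IA: "Int_stable A"
    unfolding A_def Int_stable_def
  proof (safe)
    fix E1 E2 assume "E1 \<in> Bpi" "E2 \<in> Bpi"
    then show "\<exists>E. (R -` E1 \<inter> space P) \<inter> (R -` E2 \<inter> space P) = R -` E \<inter> space P \<and> E \<in> Bpi"
      using pi_system by (intro exI[of _ "E1 \<inter> E2"]) (auto simp: Int_stable_def)
  qed
  have IB: "Int_stable B"
    unfolding B_def Int_stable_def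
  proof (safe)
    fix E1 E2 :: "'f set" assume "closed E1" "closed E2"
    then show "\<exists>E. (R' -` E1 \<inter> space P) \<inter> (R' -` E2 \<inter> space P) = R' -` E \<inter> space P \<and> closed E"
      by (intro exI[of _ "E1 \<inter> E2"]) auto
  qed
  have sA: "sigma_sets (space P) {R -` A \<inter> space P | A. A \<in> sets (borel :: 'e measure)} = sigma_sets (space P) A"
  proof -
    have "{R -` A \<inter> space P | A. A \<in> sets (borel :: 'e measure)} = {R -` A \<inter> space P | A. A \<in> sigma_sets UNIV Bpi}"
      using generates by simp
    also have "\<dots> = sigma_sets (space P) A"
      unfolding A_def by (rule sigma_sets_vimage_commute) auto
    moreover have "sigma_sets (space P) (sigma_sets (space P) A) = sigma_sets (space P) A"
      by (rule sigma_sets_sigma_sets_eq) (auto simp: A_def)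
    ultimately show ?thesis by simp
  qed
  have sB: "sigma_sets (space P) {R' -` A \<inter> space P | A. A \<in> sets (borel :: 'f measure)} = sigma_sets (space P) B"
  proof -
    have "sets (borel :: 'f measure) = sigma_sets UNIV (Collect closed)"
      unfolding borel_eq_closed by simp
    then have "{R' -` A \<inter> space P | A. A \<in> sets (borel :: 'f measure)} = {R' -` A \<inter> space P | A. A \<in> sigma_sets UNIV (Collect closed)}"
      by simp
    also have "\<dots> = sigma_sets (space P) B"
      unfolding B_def by (subst sigma_sets_vimage_commute) auto
    moreover have "sigma_sets (space P) (sigma_sets (space P) B) = sigma_sets (space P) B"
      by (rule sigma_sets_sigma_sets_eq) (auto simp: B_def)
    ultimately show ?thesis by simp
  qed
  show ?thesis unfolding sA sB by (rule p.indep_set_sigma_sets[OF ind IA IB])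
qed

end
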